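(* Let $T,S\in U(n,1)$ be unipotent (parabolic) elements. Then $ST=TS$ if and only if $S$ and $T$ are isotropic.
   Context: $U(n,1)$ is the unitary group of a Hermitian form of signature $(n,1)$ on $\mathbb{C}^{n+1}$, acting on complex hyperbolic space $H^n_{\mathbb{C}}$ and its boundary. In the Siegel model (form $w^*Jz$ with $J=\begin{pmatrix}0&0&1\\0&I_{n-1}&0\\1&0&0\end{pmatrix}$, boundary point $\infty=\pi((1,0,\dots,0)^t)$), the Heisenberg translations are $T_{(\tau,t)}=\begin{pmatrix}1&-\tau^*&\frac{-|\tau|^2+ti}{2}\\0&I_{n-1}&\tau\\0&0&1\end{pmatrix}$, $(\tau,t)\in\mathbb{C}^{n-1}\times\mathbb{R}$. Two unipotent elements $S,T$ are called isotropic if they have a common boundary fixed point $x$ and, for $K\in U(n,1)$ with $K(x)=\infty$, one has $KTK^{-1}=T_{(\tau,t)}$, $KSK^{-1}=T_{(\sigma,s)}$ with $\mathrm{Im}(\tau^*\sigma)=0$ (independent of the choice of $K$). *)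

theory Defs
  imports Complex_Main "Jordan_Normal_Form.Schur_Decomposition"
begin

text \<open>Siegel model of complex hyperbolic space. Coordinates of C^(n+1) are
  indexed 0..n; the Hermitian form is  <z,w> = w^* J z.\<close>

definition Jmat :: "nat \<Rightarrow> complex mat" where
  "Jmat n = mat (n+1) (n+1) (\<lambda>(i,j).
      if (i = 0 \<and> j = n) \<or> (i = n \<and> j = 0) \<or> (i = j \<and> 0 < i \<and> i < n) then 1 else 0)"

definition herm :: "nat \<Rightarrow> complex vec \<Rightarrow> complex vec \<Rightarrow> complex" where
  "herm n z w = (Jmat n *\<^sub>v z) \<bullet>c w"

definition Un1 :: "nat \<Rightarrow> complex mat set" where
  "Un1 n = {A \<in> carrier_mat (n+1) (n+1). mat_adjoint A * Jmat n * A = Jmat n}"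

definition unipotent :: "nat \<Rightarrow> complex mat \<Rightarrow> bool" where
  "unipotent n A \<longleftrightarrow> A \<in> carrier_mat (n+1) (n+1) \<and>
     (A - 1\<^sub>m (n+1)) ^\<^sub>m (n+1) = 0\<^sub>m (n+1) (n+1)"

text \<open>Null (boundary) and negative (interior) vectors; points of the boundary /
  of H^n_C are their complex lines.\<close>
definition null_vec :: "nat \<Rightarrow> complex vec \<Rightarrow> bool" where
  "null_vec n z \<longleftrightarrow> z \<in> carrier_vec (n+1) \<and> z \<noteq> 0\<^sub>v (n+1) \<and> herm n z z = 0"

definition neg_vec :: "nat \<Rightarrow> complex vec \<Rightarrow> bool" where
  "neg_vec n z \<longleftrightarrow> z \<in> carrier_vec (n+1) \<and> Re (herm n z z) < 0"

text \<open>A fixes the projective point spanned by z\<close>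
definition fixes_pt :: "complex mat \<Rightarrow> complex vec \<Rightarrow> bool" where
  "fixes_pt A z \<longleftrightarrow> (\<exists>c. A *\<^sub>v z = c \<cdot>\<^sub>v z)"

definition same_pt :: "complex vec \<Rightarrow> complex vec \<Rightarrow> bool" where
  "same_pt z w \<longleftrightarrow> (\<exists>c. w = c \<cdot>\<^sub>v z)"

definition parabolic :: "nat \<Rightarrow> complex mat \<Rightarrow> bool" where
  "parabolic n A \<longleftrightarrow> A \<in> Un1 n \<and>
     (\<forall>z. neg_vec n z \<longrightarrow> \<not> fixes_pt A z) \<and>
     (\<exists>z. null_vec n z \<and> fixes_pt A z \<and>
        (\<forall>w. null_vec n w \<and> fixes_pt A w \<longrightarrow> same_pt z w))"

definition e_inf :: "nat \<Rightarrow> complex vec" where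
  "e_inf n = unit_vec (n+1) 0"

definition sqnorm :: "complex vec \<Rightarrow> complex" where
  "sqnorm \<tau> = \<tau> \<bullet>c \<tau>"

text \<open>Heisenberg translation T_(tau,t), tau in C^(n-1) (indexed 0..n-2).\<close>
definition heis :: "nat \<Rightarrow> complex vec \<Rightarrow> real \<Rightarrow> complex mat" where
  "heis n \<tau> t = mat (n+1) (n+1) (\<lambda>(i,j).
      if i = j then 1
      else if i = 0 \<and> 0 < j \<and> j < n then - cnj (\<tau> $ (j-1))
      else if i = 0 \<and> j = n then (- sqnorm \<tau> + complex_of_real t * \<i>) / 2
      else if 0 < i \<and> i < n \<and> j = n then \<tau> $ (i-1)
      else 0)"

text \<open>S, T isotropic: a common boundary fixed point x and K in U(n,1) with K(x) = infinity,
  K T K^-1 = T_(tau,t), K S K^-1 = T_(sigma,s) and Im(tau^* sigma) = 0.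
  K T K^-1 = H is written as K * T = H * K (K is invertible).\<close>
definition isotropic :: "nat \<Rightarrow> complex mat \<Rightarrow> complex mat \<Rightarrow> bool" where
  "isotropic n S T \<longleftrightarrow>
     (\<exists>x. null_vec n x \<and> fixes_pt S x \<and> fixes_pt T x \<and>
       (\<exists>K \<in> Un1 n. same_pt (e_inf n) (K *\<^sub>v x) \<and>
         (\<exists>\<tau> t \<sigma> s. \<tau> \<in> carrier_vec (n-1) \<and> \<sigma> \<in> carrier_vec (n-1) \<and>
            K * T = heis n \<tau> t * K \<and> K * S = heis n \<sigma> s * K \<and>
            Im (\<sigma> \<bullet>c \<tau>) = 0)))"

end

theory Submission imports Defs begin

definition sw :: "nat \<Rightarrow> nat \<Rightarrow> nat" where
  "sw n i = (if i = 0 then n else if i = n then 0 else i)"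

lemma Jmat_carrier[simp]: "Jmat n \<in> carrier_mat (n+1) (n+1)" "Jmat n \<in> carrier_mat (Suc n) (Suc n)"
  "dim_row (Jmat n) = Suc n" "dim_col (Jmat n) = Suc n"
  unfolding Jmat_def by simp_all

lemma Jmat_entry: assumes "1 \<le> n" "i \<le> n" "j \<le> n"
  shows "Jmat n $$ (i,j) = (if j = sw n i then 1 else 0)"
  using assms unfolding Jmat_def sw_def by auto

lemma adj_entry: assumes "i < dim_col M" "j < dim_row M"
  shows "mat_adjoint M $$ (i,j) = cnj (M $$ (j,i))"
  using assms unfolding mat_adjoint_def mat_of_rows_def by auto

lemma adj_dim[simp]: "dim_row (mat_adjoint M) = dim_col M" "dim_col (mat_adjoint M) = dim_row M"
  unfolding mat_adjoint_def by auto

lemma adj_carrier[simp]: "M \<in> carrier_mat a b \<Longrightarrow> mat_adjoint M \<in> carrier_mat b a"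
  unfolding mat_adjoint_def by auto

lemma sum_delta_sw: assumes "1 \<le> n" "i \<le> n"
  shows "(\<Sum>l\<in>{0..<n+1}. (if l = sw n i then 1 else 0) * (f l::complex)) = f (sw n i)"
proof -
  have "sw n i \<in> {0..<n+1}" using assms unfolding sw_def by auto
  then show ?thesis by (simp add: if_distrib[where f="\<lambda>x. x * _"] sum.delta' cong: if_cong)
qed

lemma mult_entry: assumes "A \<in> carrier_mat m k" "B \<in> carrier_mat k p" "i < m" "j < p"
  shows "(A*B)$$(i,j) = (\<Sum>l\<in>{0..<k}. A$$(i,l)*B$$(l,j))"
  using assms by (auto simp: scalar_prod_def)

lemma JM_entry: assumes M: "M \<in> carrier_mat (n+1) (n+1)" and "1 \<le> n" "i \<le> n" "j \<le> n"
  shows "(Jmat n * M) $$ (i,j) = M $$ (sw n i, j)"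
proof -
  have "(Jmat n * M) $$ (i,j) = (\<Sum>l\<in>{0..<n+1}. Jmat n $$ (i,l) * M $$ (l,j))"
    using assms by (intro mult_entry[of _ "n+1" "n+1"]) auto
  also have "\<dots> = (\<Sum>l\<in>{0..<n+1}. (if l = sw n i then 1 else 0) * M $$ (l,j))"
    apply (rule sum.cong[OF refl]) using assms by (subst Jmat_entry) auto
  also have "\<dots> = M $$ (sw n i, j)" by (rule sum_delta_sw[OF assms(2,3)])
  finally show ?thesis .
qed

lemma split_sum: fixes n :: nat and f :: "nat \<Rightarrow> complex" assumes "1 \<le> n"
  shows "(\<Sum>k\<in>{0..<n+1}. f k) = f 0 + f n + (\<Sum>k\<in>{1..<n}. (f k :: complex))"
proof -
  have e: "{0..<n+1} = insert 0 (insert n {1..<n})" using assms by auto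
  have "(\<Sum>k\<in>insert 0 (insert n {1..<n}). f k) = f 0 + (f n + (\<Sum>k\<in>{1..<n}. f k))"
    using assms by (simp add: sum.insert)
  then show ?thesis unfolding e by (simp add: algebra_simps)
qed

lemma form_entry: assumes M: "M \<in> carrier_mat (n+1) (n+1)" and n: "1 \<le> n" and "i \<le> n" "j \<le> n"
  shows "(mat_adjoint M * Jmat n * M) $$ (i,j) =
    cnj (M$$(0,i)) * M$$(n,j) + cnj (M$$(n,i)) * M$$(0,j) + (\<Sum>k\<in>{1..<n}. cnj (M$$(k,i)) * M$$(k,j))"
proof -
  have JM: "Jmat n * M \<in> carrier_mat (n+1) (n+1)" using M by (intro mult_carrier_mat) auto
  have "mat_adjoint M * Jmat n * M = mat_adjoint M * (Jmat n * M)"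
    using M by (intro assoc_mult_mat) auto
  hence "(mat_adjoint M * Jmat n * M) $$ (i,j) = (\<Sum>k\<in>{0..<n+1}. mat_adjoint M $$ (i,k) * (Jmat n * M) $$ (k,j))"
    using assms JM M by (simp only:, intro mult_entry[of _ "n+1" "n+1"]) auto
  also have "\<dots> = (\<Sum>k\<in>{0..<n+1}. cnj (M $$ (k,i)) * M $$ (sw n k, j))"
    apply (rule sum.cong[OF refl]) using assms M by (subst JM_entry[OF M n], auto simp: adj_entry)
  also have "\<dots> = cnj (M$$(0,i)) * M$$(n,j) + cnj (M$$(n,i)) * M$$(0,j) + (\<Sum>k\<in>{1..<n}. cnj (M$$(k,i)) * M$$(k,j))"
    using n by (subst split_sum[OF n], auto simp: sw_def intro!: sum.cong)
  finally show ?thesis .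
qed

definition FF :: "nat \<Rightarrow> complex mat \<Rightarrow> nat \<Rightarrow> nat \<Rightarrow> complex" where
  "FF n M i j = cnj (M$$(0,i)) * M$$(n,j) + cnj (M$$(n,i)) * M$$(0,j) + (\<Sum>k\<in>{1..<n}. cnj (M$$(k,i)) * M$$(k,j))"

lemma Jmat_entry': "i \<le> n \<Longrightarrow> j \<le> n \<Longrightarrow> Jmat n $$ (i,j) =
   (if (i = 0 \<and> j = n) \<or> (i = n \<and> j = 0) \<or> (i = j \<and> 0 < i \<and> i < n) then 1 else 0)"
  unfolding Jmat_def by auto

lemma Un1_iff: assumes M: "M \<in> carrier_mat (n+1) (n+1)" and n: "1 \<le> n"
  shows "M \<in> Un1 n \<longleftrightarrow> (\<forall>i\<le>n. \<forall>j\<le>n. FF n M i j = Jmat n $$ (i,j))"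
proof
  assume "M \<in> Un1 n"
  hence e: "mat_adjoint M * Jmat n * M = Jmat n" unfolding Un1_def by auto
  show "\<forall>i\<le>n. \<forall>j\<le>n. FF n M i j = Jmat n $$ (i,j)"
    using form_entry[OF M n] unfolding e FF_def by auto
next
  assume a: "\<forall>i\<le>n. \<forall>j\<le>n. FF n M i j = Jmat n $$ (i,j)"
  have "mat_adjoint M * Jmat n * M = Jmat n"
  proof (rule eq_matI)
    fix i j assume "i < dim_row (Jmat n)" "j < dim_col (Jmat n)"
    then show "(mat_adjoint M * Jmat n * M) $$ (i,j) = Jmat n $$ (i,j)"
      using a form_entry[OF M n] unfolding FF_def by auto
  qed (use M in auto)
  then show "M \<in> Un1 n" unfolding Un1_def using M by auto
qed

definition bb :: "complex vec \<Rightarrow> real \<Rightarrow> complex" where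
  "bb \<tau> t = (- sqnorm \<tau> + complex_of_real t * \<i>) / 2"

lemma heis_carrier[simp]: "heis n \<tau> t \<in> carrier_mat (n+1) (n+1)" "heis n \<tau> t \<in> carrier_mat (Suc n) (Suc n)"
  "dim_row (heis n \<tau> t) = Suc n" "dim_col (heis n \<tau> t) = Suc n"
  unfolding heis_def by simp_all

lemma heis_e: assumes "i \<le> n" "j \<le> n" "1 \<le> n"
  shows "heis n \<tau> t $$ (i,j) = (if i = j then 1
      else if i = 0 \<and> 0 < j \<and> j < n then - cnj (\<tau> $ (j-1))
      else if i = 0 \<and> j = n then bb \<tau> t
      else if 0 < i \<and> i < n \<and> j = n then \<tau> $ (i-1)
      else 0)"
  using assms unfolding heis_def bb_def by auto

lemma sum_shift1: fixes n :: nat shows "(\<Sum>k\<in>{1..<n}. g (k-1)) = (\<Sum>k\<in>{0..<n-1}. (g k::complex))"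
proof (cases n)
  case 0 then show ?thesis by simp
next
  case (Suc m)
  have "(\<Sum>k\<in>{0+1..<m+1}. g (k-1)) = (\<Sum>k\<in>{0..<m}. g (k+1-1))"
    by (rule sum.shift_bounds_nat_ivl)
  then show ?thesis using Suc by simp
qed

lemma sqnorm_sum: "\<tau> \<in> carrier_vec (n-1) \<Longrightarrow> sqnorm \<tau> = (\<Sum>k\<in>{1..<n}. cnj (\<tau>$(k-1)) * \<tau>$(k-1))"
  unfolding sqnorm_def scalar_prod_def by (subst sum_shift1) (auto simp: mult.commute)

lemma heis_Un1: assumes n: "1 \<le> n" and tau: "\<tau> \<in> carrier_vec (n-1)"
  shows "heis n \<tau> t \<in> Un1 n"
proof -
  have "FF n (heis n \<tau> t) i j = Jmat n $$ (i,j)" if ij: "i \<le> n" "j \<le> n" for i j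
  proof -
    have H: "\<And>a b. a \<le> n \<Longrightarrow> b \<le> n \<Longrightarrow> heis n \<tau> t $$ (a,b) = (if a = b then 1
      else if a = 0 \<and> 0 < b \<and> b < n then - cnj (\<tau> $ (b-1))
      else if a = 0 \<and> b = n then bb \<tau> t
      else if 0 < a \<and> a < n \<and> b = n then \<tau> $ (a-1)
      else 0)" using heis_e n by blast
    have S: "(\<Sum>k\<in>{1..<n}. cnj (heis n \<tau> t $$(k,i)) * heis n \<tau> t $$(k,j)) =
      (\<Sum>k\<in>{1..<n}. cnj (if k = i then 1 else if i = n then \<tau> $ (k-1) else 0) *
         (if k = j then 1 else if j = n then \<tau> $ (k-1) else 0))"
      by (rule sum.cong[OF refl]) (use ij n in \<open>auto simp: H\<close>)
    show ?thesis
    proof (cases "i = 0")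
      case True then show ?thesis unfolding FF_def S using ij n by (auto simp: H Jmat_entry')
    next
      case i0: False
      show ?thesis
      proof (cases "i = n")
        case iN: True
        have S2: "(\<Sum>k\<in>{1..<n}. cnj (if k = i then 1 else if i = n then \<tau> $ (k-1) else 0) *
         (if k = j then 1 else if j = n then \<tau> $ (k-1) else 0)) =
          (\<Sum>k\<in>{1..<n}. cnj (\<tau> $ (k-1)) * (if k = j then 1 else if j = n then \<tau> $ (k-1) else 0))"
          by (rule sum.cong[OF refl]) (use iN in auto)
        consider "j = 0" | "j = n" | "0 < j \<and> j < n" using ij by linarith
        then show ?thesis
        proof cases
          case 1 then show ?thesis unfolding FF_def S S2 using ij n iN by (auto simp: H Jmat_entry')
        next
          case 2
          have "(\<Sum>k\<in>{1..<n}. cnj (\<tau> $ (k-1)) * (if k = j then 1 else if j = n then \<tau> $ (k-1) else 0))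
             = sqnorm \<tau>" unfolding sqnorm_sum[OF tau] using 2 by (intro sum.cong) auto
          moreover have "cnj (bb \<tau> t) + bb \<tau> t + sqnorm \<tau> = 0"
          proof -
            have "cnj (sqnorm \<tau>) = sqnorm \<tau>" unfolding sqnorm_sum[OF tau]
              by (simp add: mult.commute)
            then show ?thesis unfolding bb_def by (simp add: complex_eq_iff)
          qed
          ultimately show ?thesis unfolding FF_def S S2 using ij n iN 2 by (auto simp: H Jmat_entry')
        next
          case 3
          have "(\<Sum>k\<in>{1..<n}. cnj (\<tau> $ (k-1)) * (if k = j then 1 else if j = n then \<tau> $ (k-1) else 0))
             = cnj (\<tau> $ (j-1))" using 3 by (simp add: if_distrib[where f="\<lambda>x. _ * x"] sum.delta cong: if_cong)
          then show ?thesis unfolding FF_def S S2 using ij n iN 3 by (auto simp: H Jmat_entry')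
        qed
      next
        case False
        hence im: "0 < i" "i < n" using i0 ij by auto
        have S2: "(\<Sum>k\<in>{1..<n}. cnj (if k = i then 1 else if i = n then \<tau> $ (k-1) else 0) *
         (if k = j then 1 else if j = n then \<tau> $ (k-1) else 0)) =
          (\<Sum>k\<in>{1..<n}. if k = i then (if k = j then 1 else if j = n then \<tau> $ (k-1) else 0) else 0)"
          by (rule sum.cong[OF refl]) (use im in auto)
        have S3: "\<dots> = (if i = j then 1 else if j = n then \<tau> $ (i-1) else 0)"
          using im by (simp add: sum.delta)
        consider "j = 0" | "j = n" | "0 < j \<and> j < n" using ij by linarith
        then show ?thesis
          by cases (unfold FF_def S S2 S3, use ij n im in \<open>auto simp: H Jmat_entry'\<close>)
      qed
    qed
  qed
  then show ?thesis using Un1_iff[of "heis n \<tau> t" n] n by auto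
qed

lemma cscal_sum: assumes "\<sigma> \<in> carrier_vec (n-1)" "\<tau> \<in> carrier_vec (n-1)"
  shows "\<sigma> \<bullet>c \<tau> = (\<Sum>k\<in>{1..<n}. \<sigma>$(k-1) * cnj (\<tau>$(k-1)))"
  using assms unfolding scalar_prod_def by (subst sum_shift1) auto

definition GG :: "nat \<Rightarrow> complex vec \<Rightarrow> real \<Rightarrow> complex vec \<Rightarrow> real \<Rightarrow> nat \<Rightarrow> nat \<Rightarrow> complex" where
  "GG n \<sigma> s \<tau> t i j = (if i = j then 1
   else if i = 0 \<and> 0 < j \<and> j < n then - cnj (\<sigma>$(j-1)) - cnj (\<tau>$(j-1))
   else if i = 0 \<and> j = n then bb \<sigma> s + bb \<tau> t - (\<Sum>k\<in>{1..<n}. cnj (\<sigma>$(k-1)) * \<tau>$(k-1))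
   else if 0 < i \<and> i < n \<and> j = n then \<sigma>$(i-1) + \<tau>$(i-1)
   else 0)"

lemma heis_mult_entry: assumes n: "1 \<le> n" and ij: "i \<le> n" "j \<le> n"
  shows "(heis n \<sigma> s * heis n \<tau> t) $$ (i,j) = GG n \<sigma> s \<tau> t i j"
proof -
  let ?A = "heis n \<sigma> s" let ?B = "heis n \<tau> t"
  have "(?A * ?B) $$ (i,j) = (\<Sum>k\<in>{0..<n+1}. ?A $$ (i,k) * ?B $$ (k,j))"
    using ij by (intro mult_entry[of _ "n+1" "n+1"]) auto
  also have "\<dots> = ?A $$ (i,0) * ?B $$ (0,j) + ?A $$ (i,n) * ?B $$ (n,j) +
     (\<Sum>k\<in>{1..<n}. ?A $$ (i,k) * ?B $$ (k,j))" by (rule split_sum[OF n])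
  also have "(\<Sum>k\<in>{1..<n}. ?A $$ (i,k) * ?B $$ (k,j)) =
     (\<Sum>k\<in>{1..<n}. (if i = k then 1 else if i = 0 then - cnj (\<sigma>$(k-1)) else 0) *
       (if k = j then 1 else if j = n then \<tau>$(k-1) else 0))"
    by (rule sum.cong[OF refl]) (use n ij in \<open>auto simp: heis_e\<close>)
  finally have P: "(?A * ?B) $$ (i,j) = ?A $$ (i,0) * ?B $$ (0,j) + ?A $$ (i,n) * ?B $$ (n,j) +
     (\<Sum>k\<in>{1..<n}. (if i = k then 1 else if i = 0 then - cnj (\<sigma>$(k-1)) else 0) *
       (if k = j then 1 else if j = n then \<tau>$(k-1) else 0))" .
  consider "i = 0" | "i = n" | "0 < i \<and> i < n" using ij by linarith
  then show ?thesis
  proof cases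
    case 1
    have S: "(\<Sum>k\<in>{1..<n}. (if i = k then 1 else if i = 0 then - cnj (\<sigma>$(k-1)) else 0) *
       (if k = j then 1 else if j = n then \<tau>$(k-1) else 0)) =
       (\<Sum>k\<in>{1..<n}. - cnj (\<sigma>$(k-1)) * (if k = j then 1 else if j = n then \<tau>$(k-1) else 0))"
      by (rule sum.cong[OF refl]) (use 1 in auto)
    consider "j = 0" | "j = n" | "0 < j \<and> j < n" using ij by linarith
    then show ?thesis
    proof cases
      case 3
      have "(\<Sum>k\<in>{1..<n}. - cnj (\<sigma>$(k-1)) * (if k = j then 1 else if j = n then \<tau>$(k-1) else 0))
        = - cnj (\<sigma>$(j-1))" using 3 by (simp add: if_distrib[where f="\<lambda>x. _ * x"] sum.delta cong: if_cong)
      then show ?thesis unfolding P S using 1 3 n by (auto simp: heis_e GG_def)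
    next
      case 2
      have "(\<Sum>k\<in>{1..<n}. - cnj (\<sigma>$(k-1)) * (if k = j then 1 else if j = n then \<tau>$(k-1) else 0))
        = - (\<Sum>k\<in>{1..<n}. cnj (\<sigma>$(k-1)) * \<tau>$(k-1))" using 2
        by (simp add: sum_negf[symmetric])
      then show ?thesis unfolding P S using 1 2 n by (auto simp: heis_e GG_def)
    next
      case 0: 1
      have "(\<Sum>k\<in>{1..<n}. - cnj (\<sigma>$(k-1)) * (if k = j then 1 else if j = n then \<tau>$(k-1) else 0))
        = 0" using 0 n by (intro sum.neutral) auto
      then show ?thesis unfolding P S using 1 0 n by (auto simp: heis_e GG_def)
    qed
  next
    case 2
    have S: "(\<Sum>k\<in>{1..<n}. (if i = k then 1 else if i = 0 then - cnj (\<sigma>$(k-1)) else 0) *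
       (if k = j then 1 else if j = n then \<tau>$(k-1) else 0)) = 0"
      by (rule sum.neutral) (use 2 n in auto)
    show ?thesis unfolding P S using 2 n ij by (auto simp: heis_e GG_def)
  next
    case 3
    have S: "(\<Sum>k\<in>{1..<n}. (if i = k then 1 else if i = 0 then - cnj (\<sigma>$(k-1)) else 0) *
       (if k = j then 1 else if j = n then \<tau>$(k-1) else 0)) = (if i = j then 1 else if j = n then \<tau>$(i-1) else 0)"
      using 3 by (simp add: if_distrib[where f="\<lambda>x. x * _"] sum.delta cong: if_cong)
    show ?thesis unfolding P S using 3 n ij by (auto simp: heis_e GG_def)
  qed
qed

lemma heis_comm: assumes n: "1 \<le> n" and sig: "\<sigma> \<in> carrier_vec (n-1)" and tau: "\<tau> \<in> carrier_vec (n-1)"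
  shows "heis n \<sigma> s * heis n \<tau> t = heis n \<tau> t * heis n \<sigma> s \<longleftrightarrow> Im (\<sigma> \<bullet>c \<tau>) = 0"
proof -
  let ?X = "(\<Sum>k\<in>{1..<n}. cnj (\<sigma>$(k-1)) * \<tau>$(k-1))"
  let ?Y = "(\<Sum>k\<in>{1..<n}. cnj (\<tau>$(k-1)) * \<sigma>$(k-1))"
  have X: "?X = \<tau> \<bullet>c \<sigma>" unfolding cscal_sum[OF tau sig] by (simp add: mult.commute)
  have Y: "?Y = \<sigma> \<bullet>c \<tau>" unfolding cscal_sum[OF sig tau] by (simp add: mult.commute)
  have XY: "?X = cnj ?Y" by (simp add: mult.commute)
  have "heis n \<sigma> s * heis n \<tau> t = heis n \<tau> t * heis n \<sigma> s \<longleftrightarrow>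
     (\<forall>i\<le>n. \<forall>j\<le>n. GG n \<sigma> s \<tau> t i j = GG n \<tau> t \<sigma> s i j)"
  proof
    assume e: "heis n \<sigma> s * heis n \<tau> t = heis n \<tau> t * heis n \<sigma> s"
    show "\<forall>i\<le>n. \<forall>j\<le>n. GG n \<sigma> s \<tau> t i j = GG n \<tau> t \<sigma> s i j"
      using heis_mult_entry[OF n] e by metis
  next
    assume a: "\<forall>i\<le>n. \<forall>j\<le>n. GG n \<sigma> s \<tau> t i j = GG n \<tau> t \<sigma> s i j"
    show "heis n \<sigma> s * heis n \<tau> t = heis n \<tau> t * heis n \<sigma> s"
      by (rule eq_matI) (use a heis_mult_entry[OF n] in auto)
  qed
  also have "\<dots> \<longleftrightarrow> ?X = ?Y"
  proof
    assume "\<forall>i\<le>n. \<forall>j\<le>n. GG n \<sigma> s \<tau> t i j = GG n \<tau> t \<sigma> s i j"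
    hence "GG n \<sigma> s \<tau> t 0 n = GG n \<tau> t \<sigma> s 0 n" by auto
    then show "?X = ?Y" using n unfolding GG_def by auto
  next
    assume "?X = ?Y"
    then show "\<forall>i\<le>n. \<forall>j\<le>n. GG n \<sigma> s \<tau> t i j = GG n \<tau> t \<sigma> s i j"
      unfolding GG_def by (auto simp: algebra_simps)
  qed
  finally have step: "heis n \<sigma> s * heis n \<tau> t = heis n \<tau> t * heis n \<sigma> s \<longleftrightarrow> ?X = ?Y" .
  have gen: "\<And>z::complex. (cnj z = z) = (Im z = 0)" by (auto simp: complex_eq_iff)
  have "?X = ?Y \<longleftrightarrow> Im ?Y = 0" unfolding XY by (rule gen)
  with step show ?thesis unfolding Y by simp
qed

lemma adj_mult: fixes A B :: "complex mat" assumes A: "A \<in> carrier_mat m k" and B: "B \<in> carrier_mat k p"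
  shows "mat_adjoint (A * B) = mat_adjoint B * mat_adjoint A"
proof (rule eq_matI)
  fix i j assume ij: "i < dim_row (mat_adjoint B * mat_adjoint A)" "j < dim_col (mat_adjoint B * mat_adjoint A)"
  hence i: "i < p" and j: "j < m" using A B by auto
  have "mat_adjoint (A * B) $$ (i,j) = cnj ((A*B) $$ (j,i))" using A B i j by (subst adj_entry) auto
  also have "\<dots> = cnj (\<Sum>l\<in>{0..<k}. A$$(j,l)*B$$(l,i))" using A B i j by (subst mult_entry[OF A B]) auto
  also have "\<dots> = (\<Sum>l\<in>{0..<k}. mat_adjoint B $$ (i,l) * mat_adjoint A $$ (l,j))"
    unfolding cnj_sum using A B i j by (intro sum.cong) (auto simp: adj_entry mult.commute)
  also have "\<dots> = (mat_adjoint B * mat_adjoint A) $$ (i,j)"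
    using A B i j by (subst mult_entry[of _ p k _ m]) auto
  finally show "mat_adjoint (A * B) $$ (i,j) = (mat_adjoint B * mat_adjoint A) $$ (i,j)" .
qed (use A B in auto)

lemma adj_adj: "mat_adjoint (mat_adjoint (A::complex mat)) = A"
  by (rule eq_matI) (auto simp: adj_entry)

lemma J_adj: "mat_adjoint (Jmat n) = Jmat n"
  by (rule eq_matI) (auto simp: adj_entry Jmat_def)

lemma JJ: assumes n: "1 \<le> n" shows "Jmat n * Jmat n = 1\<^sub>m (n+1)"
proof (rule eq_matI)
  fix i j assume "i < dim_row (1\<^sub>m (n+1) :: complex mat)" "j < dim_col (1\<^sub>m (n+1) :: complex mat)"
  hence ij: "i \<le> n" "j \<le> n" by auto
  have "(Jmat n * Jmat n) $$ (i,j) = Jmat n $$ (sw n i, j)" using ij n by (intro JM_entry) auto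
  also have "\<dots> = (if i = j then 1 else 0)" using ij n by (subst Jmat_entry) (auto simp: sw_def)
  finally show "(Jmat n * Jmat n) $$ (i,j) = 1\<^sub>m (n+1) $$ (i,j)" using ij by auto
qed auto

lemma mult_sq[simp]: "A \<in> carrier_mat m m \<Longrightarrow> B \<in> carrier_mat m m \<Longrightarrow> A * B \<in> carrier_mat m m"
  by (rule mult_carrier_mat)

lemma Un1D: "A \<in> Un1 n \<Longrightarrow> A \<in> carrier_mat (n+1) (n+1)" "A \<in> Un1 n \<Longrightarrow> mat_adjoint A * Jmat n * A = Jmat n"
  unfolding Un1_def by auto

lemma Un1_mult: assumes A: "A \<in> Un1 n" and B: "B \<in> Un1 n" shows "A * B \<in> Un1 n"
proof -
  note Ac = Un1D(1)[OF A] and Bc = Un1D(1)[OF B]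
  have "mat_adjoint (A*B) * Jmat n * (A*B) = mat_adjoint B * (mat_adjoint A * Jmat n * A) * B"
    unfolding adj_mult[OF Ac Bc] using Ac Bc
    by (simp add: assoc_mult_mat[of _ "Suc n" "Suc n" _ "Suc n" _ "Suc n"] mult_carrier_mat)
  also have "\<dots> = Jmat n" unfolding Un1D(2)[OF A] using Un1D(2)[OF B] Bc
    by (simp add: assoc_mult_mat[of _ "Suc n" "Suc n" _ "Suc n" _ "Suc n"] mult_carrier_mat)
  finally show ?thesis unfolding Un1_def using Ac Bc by auto
qed

definition ainv :: "nat \<Rightarrow> complex mat \<Rightarrow> complex mat" where
  "ainv n K = Jmat n * mat_adjoint K * Jmat n"

lemma ainv_carrier: "K \<in> carrier_mat (n+1) (n+1) \<Longrightarrow> ainv n K \<in> carrier_mat (n+1) (n+1)"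
  unfolding ainv_def by auto

lemma Un1_inv: assumes K: "K \<in> Un1 n" and n: "1 \<le> n"
  shows "ainv n K * K = 1\<^sub>m (n+1)" "K * ainv n K = 1\<^sub>m (n+1)" "ainv n K \<in> Un1 n"
proof -
  note Kc = Un1D(1)[OF K]
  have Jc: "Jmat n \<in> carrier_mat (n+1) (n+1)" by simp
  have Ac: "mat_adjoint K \<in> carrier_mat (n+1) (n+1)" using Kc by simp
  note ass = assoc_mult_mat[of _ "Suc n" "Suc n" _ "Suc n" _ "Suc n"]
  have 1: "ainv n K * K = Jmat n * (mat_adjoint K * Jmat n * K)" unfolding ainv_def
    using Kc Jc Ac by (simp add: ass mult_carrier_mat)
  show a: "ainv n K * K = 1\<^sub>m (n+1)" unfolding 1 Un1D(2)[OF K] by (rule JJ[OF n])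
  show b: "K * ainv n K = 1\<^sub>m (n+1)"
    by (rule mat_mult_left_right_inverse[OF ainv_carrier[OF Kc] Kc a])
  have KJK: "K * Jmat n * mat_adjoint K = Jmat n"
  proof -
    have "K * Jmat n * mat_adjoint K = K * Jmat n * mat_adjoint K * (Jmat n * Jmat n)"
      unfolding JJ[OF n] using Kc by simp
    also have "\<dots> = K * ainv n K * Jmat n" unfolding ainv_def using Kc Jc Ac by (simp add: ass mult_carrier_mat)
    also have "\<dots> = Jmat n" unfolding b by simp
    finally show ?thesis .
  qed
  have "mat_adjoint (ainv n K) = Jmat n * K * Jmat n"
    unfolding ainv_def using Kc Jc Ac
    by (simp add: adj_mult[of _ "Suc n" "Suc n" _ "Suc n"] adj_adj J_adj ass mult_carrier_mat)
  hence "mat_adjoint (ainv n K) * Jmat n * ainv n K = Jmat n * K * (Jmat n * Jmat n) * Jmat n * mat_adjoint K * Jmat n"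
    unfolding ainv_def using Kc Jc Ac by (simp add: ass mult_carrier_mat)
  also have "\<dots> = Jmat n * (K * Jmat n * mat_adjoint K) * Jmat n"
    unfolding JJ[OF n] using Kc Jc Ac by (simp add: ass mult_carrier_mat)
  also have "\<dots> = Jmat n" unfolding KJK JJ[OF n] using Jc JJ[OF n] by (simp add: ass)
  finally show "ainv n K \<in> Un1 n" unfolding Un1_def using ainv_carrier[OF Kc] by auto
qed

lemma adjL: fixes A :: "complex mat" assumes A: "A \<in> carrier_mat m k" and x: "x \<in> carrier_vec m" and w: "w \<in> carrier_vec k"
  shows "x \<bullet>c (A *\<^sub>v w) = (mat_adjoint A *\<^sub>v x) \<bullet>c w"
proof -
  have "x \<bullet>c (A *\<^sub>v w) = (\<Sum>i\<in>{0..<m}. x$i * cnj (\<Sum>l\<in>{0..<k}. A$$(i,l) * w$l))"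
    using A x w by (auto simp: scalar_prod_def)
  also have "\<dots> = (\<Sum>i\<in>{0..<m}. \<Sum>l\<in>{0..<k}. x$i * cnj (A$$(i,l)) * cnj (w$l))"
    by (simp add: cnj_sum sum_distrib_left mult.assoc)
  also have "\<dots> = (\<Sum>l\<in>{0..<k}. \<Sum>i\<in>{0..<m}. x$i * cnj (A$$(i,l)) * cnj (w$l))"
    by (rule sum.swap)
  also have "\<dots> = (\<Sum>l\<in>{0..<k}. (\<Sum>i\<in>{0..<m}. cnj (A$$(i,l)) * x$i) * cnj (w$l))"
    unfolding sum_distrib_right by (simp add: mult_ac)
  also have "\<dots> = (mat_adjoint A *\<^sub>v x) \<bullet>c w"
    using A x w by (auto simp: scalar_prod_def adj_entry intro!: sum.cong)
  finally show ?thesis .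
qed

lemma herm_Un1: assumes M: "M \<in> Un1 n" and z: "z \<in> carrier_vec (n+1)" and w: "w \<in> carrier_vec (n+1)"
  shows "herm n (M *\<^sub>v z) (M *\<^sub>v w) = herm n z w"
proof -
  note Mc = Un1D(1)[OF M]
  have "herm n (M *\<^sub>v z) (M *\<^sub>v w) = (Jmat n *\<^sub>v (M *\<^sub>v z)) \<bullet>c (M *\<^sub>v w)"
    unfolding herm_def ..
  also have "\<dots> = (mat_adjoint M *\<^sub>v (Jmat n *\<^sub>v (M *\<^sub>v z))) \<bullet>c w"
    by (rule adjL[OF Mc _ w]) (use Mc z in \<open>auto intro!: mult_mat_vec_carrier\<close>)
  also have "mat_adjoint M *\<^sub>v (Jmat n *\<^sub>v (M *\<^sub>v z)) = (mat_adjoint M * Jmat n * M) *\<^sub>v z"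
    using Mc z by (simp add: assoc_mult_mat_vec[of _ "Suc n" "Suc n" _ "Suc n"])
  finally show ?thesis unfolding Un1D(2)[OF M] herm_def .
qed

lemma mult_zero_vec_r: "A \<in> carrier_mat m k \<Longrightarrow> A *\<^sub>v 0\<^sub>v k = (0\<^sub>v m :: 'a::comm_ring vec)"
  by (rule eq_vecI) auto

lemma zero_mat_mult_vec: "v \<in> carrier_vec k \<Longrightarrow> 0\<^sub>m m k *\<^sub>v v = (0\<^sub>v m :: 'a::comm_ring vec)"
  by (rule eq_vecI) (auto simp: scalar_prod_def)

lemma pow_mat_vec: assumes N: "N \<in> carrier_mat m m"
  shows "v \<in> carrier_vec m \<Longrightarrow> (N ^\<^sub>m k) *\<^sub>v v = ((\<lambda>x. N *\<^sub>v x) ^^ k) v"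
proof (induct k arbitrary: v)
  case 0 then show ?case using N by auto
next
  case (Suc k)
  have "(N ^\<^sub>m Suc k) *\<^sub>v v = (N ^\<^sub>m k) *\<^sub>v (N *\<^sub>v v)"
    using N Suc by (simp add: assoc_mult_mat_vec[of _ m m _ m])
  also have "\<dots> = ((\<lambda>x. N *\<^sub>v x) ^^ k) (N *\<^sub>v v)" using Suc N by simp
  finally show ?case by (simp only: funpow_Suc_right comp_def)
qed

lemma nilp_normal: fixes N :: "complex mat"
  assumes N: "N \<in> carrier_mat m m" and nor: "mat_adjoint N * N = N * mat_adjoint N"
    and nil: "N ^\<^sub>m k = 0\<^sub>m m m"
  shows "N = 0\<^sub>m m m"
proof -
  let ?f = "\<lambda>x. N *\<^sub>v x"
  have Ac: "mat_adjoint N \<in> carrier_mat m m" using N by simp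
  have key: "N *\<^sub>v v = 0\<^sub>v m" if v: "v \<in> carrier_vec m" and z: "N *\<^sub>v (N *\<^sub>v v) = 0\<^sub>v m" for v
  proof -
    define u where "u = N *\<^sub>v v"
    have u: "u \<in> carrier_vec m" unfolding u_def using N v by simp
    have Nu: "N *\<^sub>v u = 0\<^sub>v m" using z unfolding u_def .
    have "(mat_adjoint N *\<^sub>v u) \<bullet>c (mat_adjoint N *\<^sub>v u) = (N *\<^sub>v (mat_adjoint N *\<^sub>v u)) \<bullet>c u"
      using adjL[OF Ac _ u, of "mat_adjoint N *\<^sub>v u"] Ac u by (simp add: adj_adj)
    also have "N *\<^sub>v (mat_adjoint N *\<^sub>v u) = mat_adjoint N *\<^sub>v (N *\<^sub>v u)"
      using N Ac u nor by (simp add: assoc_mult_mat_vec[of _ m m _ m, symmetric])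
    also have "\<dots> = 0\<^sub>v m" unfolding Nu using Ac by (rule mult_zero_vec_r)
    finally have "(mat_adjoint N *\<^sub>v u) \<bullet>c (mat_adjoint N *\<^sub>v u) = 0" using u by simp
    moreover have "mat_adjoint N *\<^sub>v u \<in> carrier_vec m" using Ac u by simp
    ultimately have Au: "mat_adjoint N *\<^sub>v u = 0\<^sub>v m" using conjugate_square_eq_0_vec by blast
    have "v \<bullet>c (mat_adjoint N *\<^sub>v u) = (N *\<^sub>v v) \<bullet>c u"
      using adjL[OF Ac v u] by (simp add: adj_adj)
    hence "u \<bullet>c u = 0" unfolding Au u_def[symmetric] using v by simp
    then show ?thesis using u conjugate_square_eq_0_vec unfolding u_def by blast
  qed
  have fv: "(?f ^^ j) v \<in> carrier_vec m" if "v \<in> carrier_vec m" for j v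
    using that N by (induct j) auto
  have down: "(?f ^^ Suc j) v = 0\<^sub>v m \<Longrightarrow> ?f v = 0\<^sub>v m" if v: "v \<in> carrier_vec m" for j v
  proof (induct j)
    case 0 then show ?case by simp
  next
    case (Suc j)
    have "(?f ^^ Suc (Suc j)) v = ?f (?f ((?f ^^ j) v))" by simp
    hence "?f (?f ((?f ^^ j) v)) = 0\<^sub>v m" using Suc by simp
    hence "?f ((?f ^^ j) v) = 0\<^sub>v m" using key fv[OF v] by blast
    then show ?case using Suc by simp
  qed
  have "N *\<^sub>v v = 0\<^sub>v m" if v: "v \<in> carrier_vec m" for v
  proof (cases k)
    case 0
    then have "1\<^sub>m m = (0\<^sub>m m m :: complex mat)" using nil N by simp
    then have "(1\<^sub>m m :: complex mat) *\<^sub>v v = 0\<^sub>m m m *\<^sub>v v" by simp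
    then have "v = 0\<^sub>v m" using v by (simp add: zero_mat_mult_vec)
    then show ?thesis using N by (simp add: mult_zero_vec_r)
  next
    case (Suc j)
    have "(?f ^^ Suc j) v = 0\<^sub>v m" using pow_mat_vec[OF N v, of k] nil v Suc zero_mat_mult_vec[OF v] by simp
    then show ?thesis using down[OF v] by blast
  qed
  then show ?thesis
  proof -
    assume h: "\<And>v. v \<in> carrier_vec m \<Longrightarrow> N *\<^sub>v v = 0\<^sub>v m"
    show ?thesis
    proof (rule eq_matI)
      fix i j assume ij: "i < dim_row (0\<^sub>m m m :: complex mat)" "j < dim_col (0\<^sub>m m m :: complex mat)"
      have "N *\<^sub>v unit_vec m j = 0\<^sub>v m" using h ij by simp
      hence "(N *\<^sub>v unit_vec m j) $ i = 0" using ij by simp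
      moreover have "(N *\<^sub>v unit_vec m j) $ i = N $$ (i,j)" using N ij by simp
      ultimately show "N $$ (i,j) = 0\<^sub>m m m $$ (i,j)" using ij by simp
    qed (use N in auto)
  qed
qed

lemma unitary_unipotent: fixes A :: "complex mat"
  assumes A: "A \<in> carrier_mat m m" and u: "mat_adjoint A * A = 1\<^sub>m m"
    and nil: "(A - 1\<^sub>m m) ^\<^sub>m k = 0\<^sub>m m m"
  shows "A = 1\<^sub>m m"
proof -
  have Ac: "mat_adjoint A \<in> carrier_mat m m" using A by simp
  have u2: "A * mat_adjoint A = 1\<^sub>m m" by (rule mat_mult_left_right_inverse[OF Ac A u])
  have I: "1\<^sub>m m \<in> carrier_mat m m" by simp
  have adjN: "mat_adjoint (A - 1\<^sub>m m) = mat_adjoint A - 1\<^sub>m m"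
    by (rule eq_matI) (use A in \<open>auto simp: adj_entry\<close>)
  have L: "mat_adjoint (A - 1\<^sub>m m) * (A - 1\<^sub>m m) = (1\<^sub>m m - A) - (mat_adjoint A - 1\<^sub>m m)"
    unfolding adjN
    by (subst mult_minus_distrib_mat[of _ m m], use A Ac in force, use A in force, use A in force,
        subst minus_mult_distrib_mat[of _ m m], use A Ac in force, use A in force, use A in force)
      (use A Ac u in simp)
  have R: "(A - 1\<^sub>m m) * mat_adjoint (A - 1\<^sub>m m) = (1\<^sub>m m - mat_adjoint A) - (A - 1\<^sub>m m)"
    unfolding adjN
    by (subst mult_minus_distrib_mat[of _ m m], use A Ac in force, use A in force, use A in force,
        subst minus_mult_distrib_mat[of _ m m], use A Ac in force, use A in force, use A in force)
      (use A Ac u2 in simp)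
  have "mat_adjoint (A - 1\<^sub>m m) * (A - 1\<^sub>m m) = (A - 1\<^sub>m m) * mat_adjoint (A - 1\<^sub>m m)"
    unfolding L R by (rule eq_matI) (use A Ac in auto)
  from nilp_normal[OF _ this nil] A have "A - 1\<^sub>m m = 0\<^sub>m m m" using minus_carrier_mat[OF I] by blast
  show ?thesis
  proof (rule eq_matI)
    fix i j assume "i < dim_row (1\<^sub>m m :: complex mat)" "j < dim_col (1\<^sub>m m :: complex mat)"
    then have "(A - 1\<^sub>m m) $$ (i,j) = 0" using \<open>A - 1\<^sub>m m = 0\<^sub>m m m\<close> by simp
    then show "A $$ (i,j) = 1\<^sub>m m $$ (i,j)" using A \<open>i < _\<close> \<open>j < _\<close> by simp
  qed (use A in auto)
qed

lemma struct_heis: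
  assumes n: "1 \<le> n" and M: "M \<in> Un1 n" and U: "unipotent n M"
    and ev: "M *\<^sub>v e_inf n = c \<cdot>\<^sub>v e_inf n"
  shows "\<exists>\<tau> t. \<tau> \<in> carrier_vec (n-1) \<and> M = heis n \<tau> t"
proof -
  note Mc = Un1D(1)[OF M]
  have Mc': "M \<in> carrier_mat (Suc n) (Suc n)" using Mc by simp
  have FF: "\<And>i j. i \<le> n \<Longrightarrow> j \<le> n \<Longrightarrow> FF n M i j = Jmat n $$ (i,j)"
    using Un1_iff[OF Mc n] M by blast
  have col0: "M $$ (i,0) = (if i = 0 then c else 0)" if "i \<le> n" for i
  proof -
    have "(M *\<^sub>v e_inf n) $ i = (c \<cdot>\<^sub>v e_inf n) $ i" using ev by simp
    then show ?thesis using that Mc unfolding e_inf_def by simp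
  qed
  define N where "N = M - 1\<^sub>m (n+1)"
  have Nc: "N \<in> carrier_mat (Suc n) (Suc n)" unfolding N_def using Mc' by (intro minus_carrier_mat) auto
  have Ne: "N *\<^sub>v e_inf n = (c - 1) \<cdot>\<^sub>v e_inf n"
  proof (rule eq_vecI)
    fix i assume "i < dim_vec ((c - 1) \<cdot>\<^sub>v e_inf n)"
    hence i: "i \<le> n" unfolding e_inf_def by simp
    have "(N *\<^sub>v e_inf n) $ i = N $$ (i,0)" using i Nc unfolding e_inf_def by simp
    also have "\<dots> = M $$ (i,0) - (if i = 0 then 1 else 0)" unfolding N_def using i Mc by simp
    finally show "(N *\<^sub>v e_inf n) $ i = ((c - 1) \<cdot>\<^sub>v e_inf n) $ i"
      using i col0[OF i] unfolding e_inf_def by simp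
  qed (use Nc in \<open>simp add: e_inf_def\<close>)
  have ec: "e_inf n \<in> carrier_vec (Suc n)" unfolding e_inf_def by simp
  have fk: "((\<lambda>x. N *\<^sub>v x) ^^ k) (e_inf n) = (c - 1)^k \<cdot>\<^sub>v e_inf n" for k
  proof (induct k)
    case 0 then show ?case using ec by simp
  next
    case (Suc k)
    have "((\<lambda>x. N *\<^sub>v x) ^^ Suc k) (e_inf n) = N *\<^sub>v ((c - 1)^k \<cdot>\<^sub>v e_inf n)" using Suc by simp
    also have "\<dots> = (c - 1)^k \<cdot>\<^sub>v (N *\<^sub>v e_inf n)" by (rule mult_mat_vec[OF Nc ec])
    also have "\<dots> = (c - 1)^Suc k \<cdot>\<^sub>v e_inf n" unfolding Ne by (simp add: smult_smult_assoc mult.commute)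
    finally show ?case .
  qed
  have N0: "N ^\<^sub>m (n+1) = 0\<^sub>m (n+1) (n+1)" using U unfolding unipotent_def N_def by simp
  have "(c - 1)^(n+1) \<cdot>\<^sub>v e_inf n = 0\<^sub>v (n+1)"
    using pow_mat_vec[OF Nc ec, of "n+1"] fk[of "n+1"] N0 zero_mat_mult_vec[OF ec] by simp
  hence "((c - 1)^(n+1) \<cdot>\<^sub>v e_inf n) $ 0 = 0" by simp
  hence "(c - 1)^(n+1) = 0" unfolding e_inf_def by simp
  hence lam: "c = 1" by auto
  have col0': "M $$ (i,0) = (if i = 0 then 1 else 0)" if "i \<le> n" for i using col0[OF that] lam by simp
  have rown: "M $$ (n,j) = (if j = n then 1 else 0)" if j: "j \<le> n" for j
  proof -
    have "(\<Sum>k\<in>{1..<n}. cnj (M$$(k,0)) * M$$(k,j)) = 0"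
      by (rule sum.neutral) (use col0' n in auto)
    then have "FF n M 0 j = M $$ (n,j)" unfolding FF_def using col0' n by simp
    then show ?thesis using FF[of 0 j] j n by (simp add: Jmat_entry')
  qed
  define A where "A = mat (n-1) (n-1) (\<lambda>(i,j). M $$ (i+1, j+1))"
  have Ac: "A \<in> carrier_mat (n-1) (n-1)" unfolding A_def by simp
  have Ae: "A $$ (i,j) = M $$ (i+1,j+1)" if "i < n-1" "j < n-1" for i j
    using that unfolding A_def by simp
  have AA: "mat_adjoint A * A = 1\<^sub>m (n-1)"
  proof (rule eq_matI)
    fix i j assume "i < dim_row (1\<^sub>m (n-1) :: complex mat)" "j < dim_col (1\<^sub>m (n-1) :: complex mat)"
    hence ij: "i < n-1" "j < n-1" by auto
    have "(mat_adjoint A * A) $$ (i,j) = (\<Sum>l\<in>{0..<n-1}. mat_adjoint A $$ (i,l) * A $$ (l,j))"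
      using Ac ij by (intro mult_entry[of _ "n-1" "n-1"]) auto
    also have "\<dots> = (\<Sum>l\<in>{0..<n-1}. cnj (M $$ (l+1,i+1)) * M $$ (l+1,j+1))"
      by (rule sum.cong[OF refl]) (use Ac ij in \<open>auto simp: adj_entry Ae\<close>)
    also have "\<dots> = (\<Sum>k\<in>{1..<n}. cnj (M $$ (k-1+1,i+1)) * M $$ (k-1+1,j+1))"
      by (rule sum_shift1[symmetric])
    also have "\<dots> = (\<Sum>k\<in>{1..<n}. cnj (M $$ (k,i+1)) * M $$ (k,j+1))"
      by (rule sum.cong) auto
    also have "\<dots> = FF n M (i+1) (j+1)"
      unfolding FF_def using rown ij by auto
    also have "\<dots> = Jmat n $$ (i+1,j+1)" using FF ij by simp
    also have "\<dots> = 1\<^sub>m (n-1) $$ (i,j)" using ij by (auto simp: Jmat_entry')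
    finally show "(mat_adjoint A * A) $$ (i,j) = 1\<^sub>m (n-1) $$ (i,j)" .
  qed (use Ac in auto)
  have Aminus: "(A - 1\<^sub>m (n-1)) $$ (i-1,j-1) = N $$ (i,j)" if "0 < i" "i < n" "0 < j" "j < n" for i j
    using that Mc unfolding N_def by (auto simp: Ae)
  have ACc: "A - 1\<^sub>m (n-1) \<in> carrier_mat (n-1) (n-1)" using Ac by (intro minus_carrier_mat) auto
  have claim: "(\<forall>i. 0 < i \<and> i < n \<longrightarrow> (N ^\<^sub>m k) $$ (i,0) = 0) \<and>
    (\<forall>i j. 0 < i \<and> i < n \<and> 0 < j \<and> j < n \<longrightarrow> (N ^\<^sub>m k) $$ (i,j) = ((A - 1\<^sub>m (n-1)) ^\<^sub>m k) $$ (i-1,j-1))" for k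
  proof (induct k)
    case 0 then show ?case using Nc Ac by auto
  next
    case (Suc k)
    have Xc: "N ^\<^sub>m k \<in> carrier_mat (n+1) (n+1)" using Nc by simp
    have XN: "(N ^\<^sub>m Suc k) $$ (i,j) = (N ^\<^sub>m k) $$ (i,0) * N $$ (0,j) + (N ^\<^sub>m k) $$ (i,n) * N $$ (n,j) +
       (\<Sum>l\<in>{1..<n}. (N ^\<^sub>m k) $$ (i,l) * N $$ (l,j))" if "i \<le> n" "j \<le> n" for i j
    proof -
      have "(N ^\<^sub>m Suc k) $$ (i,j) = (\<Sum>l\<in>{0..<n+1}. (N ^\<^sub>m k) $$ (i,l) * N $$ (l,j))"
        using that Xc Nc by (simp only: pow_mat.simps, intro mult_entry[of _ "n+1" "n+1"]) auto
      then show ?thesis using split_sum[OF n] by simp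
    qed
    have c0: "N $$ (l,0) = 0" if "l \<le> n" for l using that col0' Mc unfolding N_def by simp
    have rn: "N $$ (n,j) = 0" if "j < n" for j using that rown Mc unfolding N_def by simp
    show ?case
    proof (intro conjI allI impI)
      fix i assume i: "0 < i \<and> i < n"
      have "(\<Sum>l\<in>{1..<n}. (N ^\<^sub>m k) $$ (i,l) * N $$ (l,0)) = 0" by (rule sum.neutral) (auto simp: c0)
      then show "(N ^\<^sub>m Suc k) $$ (i,0) = 0" using XN[of i 0] i c0[of 0] c0[of n] by simp
    next
      fix i j assume ij: "0 < i \<and> i < n \<and> 0 < j \<and> j < n"
      have "(N ^\<^sub>m Suc k) $$ (i,j) = (\<Sum>l\<in>{1..<n}. (N ^\<^sub>m k) $$ (i,l) * N $$ (l,j))"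
        using XN[of i j] ij Suc rn[of j] by simp
      also have "\<dots> = (\<Sum>l\<in>{1..<n}. ((A - 1\<^sub>m (n-1)) ^\<^sub>m k) $$ (i-1,l-1) * (A - 1\<^sub>m (n-1)) $$ (l-1,j-1))"
        by (rule sum.cong[OF refl]) (use ij Suc Aminus in auto)
      also have "\<dots> = (\<Sum>l\<in>{0..<n-1}. ((A - 1\<^sub>m (n-1)) ^\<^sub>m k) $$ (i-1,l) * (A - 1\<^sub>m (n-1)) $$ (l,j-1))"
        by (rule sum_shift1)
      also have "\<dots> = ((A - 1\<^sub>m (n-1)) ^\<^sub>m Suc k) $$ (i-1,j-1)"
        using ij ACc by (simp only: pow_mat.simps, intro mult_entry[of _ "n-1" "n-1", symmetric]) auto
      finally show "(N ^\<^sub>m Suc k) $$ (i,j) = ((A - 1\<^sub>m (n-1)) ^\<^sub>m Suc k) $$ (i-1,j-1)" .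
    qed
  qed
  have Anil: "(A - 1\<^sub>m (n-1)) ^\<^sub>m (n+1) = 0\<^sub>m (n-1) (n-1)"
  proof (rule eq_matI)
    fix i j assume "i < dim_row (0\<^sub>m (n-1) (n-1) :: complex mat)" "j < dim_col (0\<^sub>m (n-1) (n-1) :: complex mat)"
    hence ij: "i < n-1" "j < n-1" by auto
    have "((A - 1\<^sub>m (n-1)) ^\<^sub>m (n+1)) $$ (i,j) = (N ^\<^sub>m (n+1)) $$ (i+1,j+1)"
      using conjunct2[OF claim[of "n+1"], rule_format, of "i+1" "j+1"] ij
      by (metis Suc_eq_plus1 add_diff_cancel_right' less_diff_conv zero_less_Suc)
    then show "((A - 1\<^sub>m (n-1)) ^\<^sub>m (n+1)) $$ (i,j) = 0\<^sub>m (n-1) (n-1) $$ (i,j)" using N0 ij by (simp del: pow_mat.simps)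
  qed (use ACc in auto)
  have A1: "A = 1\<^sub>m (n-1)" by (rule unitary_unipotent[OF Ac AA Anil])
  have mid: "M $$ (k,i) = (if k = i then 1 else 0)" if "0 < k" "k < n" "0 < i" "i < n" for k i
  proof -
    have h: "k - 1 < n - 1" "i - 1 < n - 1" "(k - 1 = i - 1) = (k = i)" using that by auto
    show ?thesis using Ae[OF h(1,2)] that h unfolding A1 by auto
  qed
  have rown': "M $$ (n,n) = 1" using rown by simp
  have row0: "M $$ (0,i) = - cnj (M $$ (i,n))" if i: "0 < i" "i < n" for i
  proof -
    have "(\<Sum>k\<in>{1..<n}. cnj (M$$(k,i)) * M$$(k,n)) = (\<Sum>k\<in>{1..<n}. if k = i then M$$(k,n) else 0)"
      by (rule sum.cong[OF refl]) (use i mid in auto)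
    also have "\<dots> = M$$(i,n)" using i by simp
    finally have "FF n M i n = cnj (M$$(0,i)) + M$$(i,n)"
      unfolding FF_def using rown i by simp
    moreover have "FF n M i n = 0" using FF[of i n] i by (simp add: Jmat_entry')
    ultimately have "cnj (M$$(0,i)) = - M$$(i,n)" by (simp add: add_eq_0_iff)
    then have "cnj (cnj (M$$(0,i))) = cnj (- M$$(i,n))" by simp
    then show ?thesis by simp
  qed
  define \<tau> where "\<tau> = vec (n-1) (\<lambda>l. M $$ (l+1, n))"
  define t where "t = 2 * Im (M $$ (0,n))"
  have tau: "\<tau> \<in> carrier_vec (n-1)" unfolding \<tau>_def by simp
  have taue: "\<tau> $ (k-1) = M $$ (k,n)" if "0 < k" "k < n" for k
  proof -
    have "Suc (k - Suc 0) = k" using that by simp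
    then show ?thesis using that unfolding \<tau>_def by simp
  qed
  have sq: "sqnorm \<tau> = (\<Sum>k\<in>{1..<n}. cnj (M$$(k,n)) * M$$(k,n))"
    unfolding sqnorm_sum[OF tau] apply (rule sum.cong[OF refl])
    subgoal for x using taue[of x] by auto
    done
  have "FF n M n n = 0" using FF[of n n] n by (simp add: Jmat_entry')
  hence corner: "cnj (M$$(0,n)) + M$$(0,n) + sqnorm \<tau> = 0"
    unfolding FF_def sq using rown' by (simp add: add.commute)
  have b: "M $$ (0,n) = bb \<tau> t"
    using corner unfolding bb_def t_def by (simp add: complex_eq_iff)
  have "M = heis n \<tau> t"
  proof (rule eq_matI)
    fix i j assume "i < dim_row (heis n \<tau> t)" "j < dim_col (heis n \<tau> t)"
    hence ij: "i \<le> n" "j \<le> n" by auto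
    consider "j = 0" | "j = n" | "0 < j \<and> j < n" using ij by linarith
    then show "M $$ (i,j) = heis n \<tau> t $$ (i,j)"
    proof cases
      case 1 then show ?thesis using ij n col0' by (simp add: heis_e)
    next
      case 2
      consider "i = 0" | "i = n" | "0 < i \<and> i < n" using ij by linarith
      then show ?thesis
        by cases (use ij n 2 b rown taue in \<open>auto simp: heis_e\<close>)
    next
      case 3
      consider "i = 0" | "i = n" | "0 < i \<and> i < n" using ij by linarith
      then show ?thesis
        by cases (use ij n 3 row0 rown mid taue in \<open>auto simp: heis_e\<close>)
    qed
  qed (use Mc in auto)
  then show ?thesis using tau by blast
qed

lemma Jv_entry: assumes z: "z \<in> carrier_vec (n+1)" and n: "1 \<le> n" and i: "i \<le> n"
  shows "(Jmat n *\<^sub>v z) $ i = z $ (sw n i)"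
proof -
  have "(Jmat n *\<^sub>v z) $ i = (\<Sum>l\<in>{0..<n+1}. Jmat n $$ (i,l) * z $ l)"
    using z i by (auto simp: scalar_prod_def)
  also have "\<dots> = (\<Sum>l\<in>{0..<n+1}. (if l = sw n i then 1 else 0) * z $ l)"
    apply (rule sum.cong[OF refl]) using n i by (subst Jmat_entry) auto
  also have "\<dots> = z $ (sw n i)" by (rule sum_delta_sw[OF n i])
  finally show ?thesis .
qed

lemma herm_sum: assumes z: "z \<in> carrier_vec (n+1)" and n: "1 \<le> n"
  shows "herm n z z = z$n * cnj (z$0) + z$0 * cnj (z$n) + (\<Sum>k\<in>{1..<n}. z$k * cnj (z$k))"
proof -
  have "herm n z z = (\<Sum>k\<in>{0..<n+1}. (Jmat n *\<^sub>v z) $ k * cnj (z $ k))"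
    unfolding herm_def using z by (simp add: scalar_prod_def)
  also have "\<dots> = (\<Sum>k\<in>{0..<n+1}. z $ (sw n k) * cnj (z $ k))"
    apply (rule sum.cong[OF refl]) using z n by (subst Jv_entry) auto
  also have "\<dots> = z$n * cnj (z$0) + z$0 * cnj (z$n) + (\<Sum>k\<in>{1..<n}. z$k * cnj (z$k))"
    using n by (subst split_sum[OF n], auto simp: sw_def intro!: sum.cong)
  finally show ?thesis .
qed

lemma sum_sq_zero: fixes f :: "nat \<Rightarrow> complex"
  assumes "(\<Sum>k\<in>A. f k * cnj (f k)) = 0" "finite A" "k \<in> A" shows "f k = 0"
proof -
  have r: "(\<Sum>k\<in>A. f k * cnj (f k)) = of_real (\<Sum>k\<in>A. (cmod (f k))^2)"
    unfolding of_real_sum by (rule sum.cong[OF refl]) (metis complex_norm_square)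
  hence "complex_of_real (\<Sum>k\<in>A. (cmod (f k))^2) = 0" using assms(1) by metis
  hence "(\<Sum>k\<in>A. (cmod (f k))^2) = 0" by (simp only: of_real_eq_0_iff)
  hence "\<forall>k\<in>A. (cmod (f k))^2 = 0" using assms(2) by (simp add: sum_nonneg_eq_0_iff)
  then show ?thesis using assms(3) by simp
qed

lemma mv_entry: assumes "A \<in> carrier_mat m k" "v \<in> carrier_vec k" "i < m"
  shows "(A *\<^sub>v v) $ i = (\<Sum>l\<in>{0..<k}. A$$(i,l) * v$l)"
  using assms by (auto simp: scalar_prod_def)

lemma one_Un1: "1\<^sub>m (n+1) \<in> Un1 n"
proof -
  have "mat_adjoint (1\<^sub>m (n+1)) = (1\<^sub>m (n+1) :: complex mat)"
    by (rule eq_matI) (auto simp: adj_entry)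
  then show ?thesis unfolding Un1_def by simp
qed

lemma J_Un1: "1 \<le> n \<Longrightarrow> Jmat n \<in> Un1 n"
  unfolding Un1_def using JJ[of n] by (simp add: J_adj)


lemma herm_smult: assumes z: "z \<in> carrier_vec (n+1)" and n: "1 \<le> n"
  shows "herm n (a \<cdot>\<^sub>v z) (a \<cdot>\<^sub>v z) = (a * cnj a) * herm n z z"
proof -
  have az: "a \<cdot>\<^sub>v z \<in> carrier_vec (n+1)" using z by simp
  have s: "(\<Sum>k\<in>{1..<n}. (a \<cdot>\<^sub>v z)$k * cnj ((a \<cdot>\<^sub>v z)$k)) = (a * cnj a) * (\<Sum>k\<in>{1..<n}. z$k * cnj (z$k))"
    unfolding sum_distrib_left by (rule sum.cong[OF refl]) (use z in \<open>auto simp: ac_simps\<close>)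
  show ?thesis unfolding herm_sum[OF az n] herm_sum[OF z n] s using z n
    by (simp add: algebra_simps)
qed

lemma K_exists: assumes n: "1 \<le> n" and z: "null_vec n z"
  shows "\<exists>K\<in>Un1 n. \<exists>c. c \<noteq> 0 \<and> K *\<^sub>v z = c \<cdot>\<^sub>v e_inf n"
proof -
  have zc: "z \<in> carrier_vec (n+1)" and z0: "z \<noteq> 0\<^sub>v (n+1)" and hz: "herm n z z = 0"
    using z unfolding null_vec_def by auto
  show ?thesis
  proof (cases "z $ n = 0")
    case True
    hence s0: "(\<Sum>k\<in>{1..<n}. z$k * cnj (z$k)) = 0" using hz herm_sum[OF zc n] by simp
    have midz: "z $ k = 0" if "0 < k" "k < n" for k
      by (rule sum_sq_zero[of "\<lambda>k. z$k" "{1..<n}" k, OF s0]) (use that in auto)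
    have ze: "z = (z$0) \<cdot>\<^sub>v e_inf n"
    proof (rule eq_vecI)
      fix i assume i: "i < dim_vec ((z$0) \<cdot>\<^sub>v e_inf n)"
      hence "i \<le> n" unfolding e_inf_def by simp
      hence "i = 0 \<or> i = n \<or> (0 < i \<and> i < n)" by linarith
      then show "z $ i = ((z$0) \<cdot>\<^sub>v e_inf n) $ i" using i midz True unfolding e_inf_def by auto
    qed (use zc in \<open>simp add: e_inf_def\<close>)
    have "z $ 0 \<noteq> 0"
    proof
      assume h: "z $ 0 = 0"
      have "z = 0 \<cdot>\<^sub>v e_inf n" using ze unfolding h .
      also have "\<dots> = 0\<^sub>v (n+1)" unfolding e_inf_def by (rule eq_vecI) auto
      finally show False using z0 by simp
    qed
    moreover have "1\<^sub>m (n+1) *\<^sub>v z = (z$0) \<cdot>\<^sub>v e_inf n"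
    proof -
      have "1\<^sub>m (n+1) *\<^sub>v z = z" using zc by simp
      then show ?thesis by (rule trans[OF _ ze])
    qed
    ultimately show ?thesis using one_Un1 by blast
  next
    case False
    define x where "x = (1 / z$n) \<cdot>\<^sub>v z"
    have xc: "x \<in> carrier_vec (n+1)" unfolding x_def using zc by simp
    have xe: "x $ i = z $ i / z $ n" if "i \<le> n" for i unfolding x_def using zc that by simp
    have xn: "x $ n = 1" using xe[of n] False by simp
    have "herm n x x = ((1 / z$n) * cnj (1 / z$n)) * herm n z z"
      unfolding x_def by (rule herm_smult[OF zc n])
    hence "herm n x x = 0" using hz by simp
    hence hx: "x$0 + cnj (x$0) + (\<Sum>k\<in>{1..<n}. x$k * cnj (x$k)) = 0"
      using hz herm_sum[OF xc n] xn by (simp add: ac_simps)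
    define S where "S = (\<Sum>k\<in>{1..<n}. x$k * cnj (x$k))"
    define \<tau> where "\<tau> = vec (n-1) (\<lambda>l. - x$(l+1))"
    define t where "t = - 2 * Im (x$0)"
    have tau: "\<tau> \<in> carrier_vec (n-1)" unfolding \<tau>_def by simp
    have taue: "\<tau> $ (k-1) = - x $ k" if "0 < k" "k < n" for k
    proof -
      have "Suc (k - Suc 0) = k" using that by simp
      then show ?thesis using that unfolding \<tau>_def by simp
    qed
    have sq: "sqnorm \<tau> = S"
      unfolding sqnorm_sum[OF tau] S_def apply (rule sum.cong[OF refl])
      subgoal for k using taue[of k] by auto
      done
    define H where "H = heis n \<tau> t"
    have Hx: "H *\<^sub>v x = unit_vec (n+1) n"
    proof (rule eq_vecI)
      fix i assume "i < dim_vec (unit_vec (n+1) n :: complex vec)"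
      hence i: "i \<le> n" by simp
      have "(H *\<^sub>v x) $ i = (\<Sum>l\<in>{0..<n+1}. H$$(i,l) * x$l)"
        unfolding H_def using xc i by (intro mv_entry[of _ "n+1" "n+1"]) auto
      also have "\<dots> = H$$(i,0) * x$0 + H$$(i,n) * x$n + (\<Sum>l\<in>{1..<n}. H$$(i,l) * x$l)"
        by (rule split_sum[OF n])
      finally have e: "(H *\<^sub>v x) $ i = H$$(i,0) * x$0 + H$$(i,n) * x$n + (\<Sum>l\<in>{1..<n}. H$$(i,l) * x$l)" .
      consider "i = 0" | "i = n" | "0 < i \<and> i < n" using i by linarith
      then show "(H *\<^sub>v x) $ i = unit_vec (n+1) n $ i"
      proof cases
        case 1
        have s: "(\<Sum>l\<in>{1..<n}. H$$(i,l) * x$l) = S" unfolding S_def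
          apply (rule sum.cong[OF refl])
          subgoal for l using 1 n taue[of l] unfolding H_def by (auto simp: heis_e)
          done
        have "Re (x$0) + Re S / 2 = 0" "Im S = 0" using hx unfolding S_def[symmetric]
          by (auto simp: complex_eq_iff)
        moreover have "H$$(0,0) = 1" "H$$(0,n) = bb \<tau> t" unfolding H_def using n by (simp_all add: heis_e)
        ultimately have "H$$(i,0) * x$0 + H$$(i,n) * x$n + S = 0"
          using 1 n xn unfolding bb_def sq t_def by (simp add: complex_eq_iff)
        then show ?thesis unfolding e s using 1 n by simp
      next
        case 2
        have s: "(\<Sum>l\<in>{1..<n}. H$$(i,l) * x$l) = 0"
          by (rule sum.neutral) (use 2 n in \<open>auto simp: heis_e H_def\<close>)
        show ?thesis unfolding e s using 2 n xn unfolding H_def by (simp add: heis_e)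
      next
        case 3
        have s: "(\<Sum>l\<in>{1..<n}. H$$(i,l) * x$l) = x $ i"
        proof -
          have "(\<Sum>l\<in>{1..<n}. H$$(i,l) * x$l) = (\<Sum>l\<in>{1..<n}. if l = i then x$l else 0)"
            by (rule sum.cong[OF refl]) (use 3 n in \<open>auto simp: heis_e H_def\<close>)
          then show ?thesis using 3 by simp
        qed
        show ?thesis unfolding e s using 3 n xn taue[of i] unfolding H_def by (simp add: heis_e)
      qed
    qed (simp add: H_def)
    have Je: "Jmat n *\<^sub>v unit_vec (n+1) n = e_inf n"
    proof (rule eq_vecI)
      fix i assume "i < dim_vec (e_inf n)"
      hence i: "i \<le> n" unfolding e_inf_def by simp
      show "(Jmat n *\<^sub>v unit_vec (n+1) n) $ i = e_inf n $ i"
        using Jv_entry[OF _ n i, of "unit_vec (n+1) n"] i n unfolding e_inf_def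
        by (auto simp: sw_def)
    qed (simp add: e_inf_def)
    define K where "K = Jmat n * H"
    have KU: "K \<in> Un1 n" unfolding K_def H_def by (rule Un1_mult[OF J_Un1[OF n] heis_Un1[OF n tau]])
    have Hc: "H \<in> carrier_mat (n+1) (n+1)" unfolding H_def by simp
    have "K *\<^sub>v z = K *\<^sub>v ((z$n) \<cdot>\<^sub>v x)" unfolding x_def using False zc by (simp add: smult_smult_assoc)
    also have "\<dots> = (z$n) \<cdot>\<^sub>v (K *\<^sub>v x)" by (rule mult_mat_vec[of _ "Suc n", OF _ xc]) (use Hc in \<open>simp add: K_def\<close>)
    also have "K *\<^sub>v x = e_inf n" unfolding K_def using Hc xc Hx Je
      by (simp add: assoc_mult_mat_vec[of _ "Suc n" "Suc n" _ "Suc n"])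
    finally show ?thesis using KU False by blast
  qed
qed

lemma conj_heis: assumes n: "1 \<le> n" and K: "K \<in> Un1 n" and T: "T \<in> Un1 n" and U: "unipotent n T"
  and zc: "z \<in> carrier_vec (n+1)" and Tz: "T *\<^sub>v z = a \<cdot>\<^sub>v z"
  and Kz: "K *\<^sub>v z = c \<cdot>\<^sub>v e_inf n" and c: "c \<noteq> 0"
  shows "\<exists>\<tau> t. \<tau> \<in> carrier_vec (n-1) \<and> K * T * ainv n K = heis n \<tau> t"
proof -
  define Ki where "Ki = ainv n K"
  have Kc: "K \<in> carrier_mat (Suc n) (Suc n)" using Un1D(1)[OF K] by simp
  have Tc: "T \<in> carrier_mat (Suc n) (Suc n)" using Un1D(1)[OF T] by simp
  have Kic: "Ki \<in> carrier_mat (Suc n) (Suc n)" using ainv_carrier[OF Un1D(1)[OF K]] unfolding Ki_def by simp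
  have KiK: "Ki * K = 1\<^sub>m (Suc n)" using Un1_inv(1)[OF K n] unfolding Ki_def by simp
  have KKi: "K * Ki = 1\<^sub>m (Suc n)" using Un1_inv(2)[OF K n] unfolding Ki_def by simp
  have KiU: "Ki \<in> Un1 n" using Un1_inv(3)[OF K n] unfolding Ki_def .
  have ec: "e_inf n \<in> carrier_vec (Suc n)" unfolding e_inf_def by simp
  have zc': "z \<in> carrier_vec (Suc n)" using zc by simp
  define M where "M = K * T * Ki"
  have Mc: "M \<in> carrier_mat (Suc n) (Suc n)" unfolding M_def using Kc Tc Kic by simp
  have MU: "M \<in> Un1 n" unfolding M_def by (intro Un1_mult K T KiU)
  have "z = Ki *\<^sub>v (K *\<^sub>v z)" using KiK Kic Kc zc' by (simp add: assoc_mult_mat_vec[of _ "Suc n" "Suc n" _ "Suc n", symmetric])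
  also have "\<dots> = c \<cdot>\<^sub>v (Ki *\<^sub>v e_inf n)" unfolding Kz by (rule mult_mat_vec[OF Kic ec])
  finally have Kie: "Ki *\<^sub>v e_inf n = (1/c) \<cdot>\<^sub>v z" using c by (simp add: smult_smult_assoc)
  have "M *\<^sub>v e_inf n = K *\<^sub>v (T *\<^sub>v (Ki *\<^sub>v e_inf n))"
    unfolding M_def using Kc Tc Kic ec by (simp add: assoc_mult_mat_vec[of _ "Suc n" "Suc n" _ "Suc n"])
  also have "\<dots> = K *\<^sub>v (T *\<^sub>v ((1/c) \<cdot>\<^sub>v z))" unfolding Kie ..
  also have "\<dots> = (1/c) \<cdot>\<^sub>v (K *\<^sub>v (T *\<^sub>v z))"
    using Kc Tc zc' by (simp add: mult_mat_vec)
  also have "\<dots> = (1/c) \<cdot>\<^sub>v (K *\<^sub>v (a \<cdot>\<^sub>v z))" unfolding Tz ..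
  also have "\<dots> = ((1/c) * a * c) \<cdot>\<^sub>v e_inf n"
    using Kc zc' by (simp add: mult_mat_vec Kz smult_smult_assoc)
  also have "(1/c) * a * c = a" using c by simp
  finally have Me: "M *\<^sub>v e_inf n = a \<cdot>\<^sub>v e_inf n" .
  have Tm: "T - 1\<^sub>m (Suc n) \<in> carrier_mat (Suc n) (Suc n)" using Tc by (intro minus_carrier_mat) auto
  have Mm: "M - 1\<^sub>m (Suc n) = K * (T - 1\<^sub>m (Suc n)) * Ki"
  proof -
    have "K * (T - 1\<^sub>m (Suc n)) * Ki = (K * T - K * 1\<^sub>m (Suc n)) * Ki"
      using Kc Tc by (subst mult_minus_distrib_mat[of _ "Suc n" "Suc n"]) auto
    also have "\<dots> = K * T * Ki - K * Ki"
      using Kc Tc Kic by (subst minus_mult_distrib_mat[of _ "Suc n" "Suc n"]) auto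
    finally show ?thesis unfolding KKi M_def by simp
  qed
  have wit: "similar_mat_wit (M - 1\<^sub>m (Suc n)) (T - 1\<^sub>m (Suc n)) K Ki"
    unfolding similar_mat_wit_def Let_def using Mm Kc Kic Tm KKi KiK Mc by auto
  have "(M - 1\<^sub>m (Suc n)) ^\<^sub>m (n+1) = K * (T - 1\<^sub>m (Suc n)) ^\<^sub>m (n+1) * Ki"
    by (rule similar_mat_wit_pow_id[OF wit])
  also have "(T - 1\<^sub>m (Suc n)) ^\<^sub>m (n+1) = 0\<^sub>m (n+1) (n+1)" using U unfolding unipotent_def by simp
  finally have "(M - 1\<^sub>m (Suc n)) ^\<^sub>m (n+1) = 0\<^sub>m (n+1) (n+1)" using Kc Kic by simp
  hence MUn: "unipotent n M" unfolding unipotent_def using Mc by simp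
  from struct_heis[OF n MU MUn Me] show ?thesis unfolding M_def Ki_def .
qed

lemma KT_heis: assumes n: "1 \<le> n" and K: "K \<in> Un1 n" and T: "T \<in> Un1 n"
  and M: "K * T * ainv n K = H" shows "K * T = H * K"
proof -
  have Kc: "K \<in> carrier_mat (Suc n) (Suc n)" using Un1D(1)[OF K] by simp
  have Tc: "T \<in> carrier_mat (Suc n) (Suc n)" using Un1D(1)[OF T] by simp
  have Kic: "ainv n K \<in> carrier_mat (Suc n) (Suc n)" using ainv_carrier[OF Un1D(1)[OF K]] by simp
  have KiK: "ainv n K * K = 1\<^sub>m (Suc n)" using Un1_inv(1)[OF K n] by simp
  have "H * K = K * T * (ainv n K * K)" unfolding M[symmetric] using Kc Tc Kic
    by (simp add: assoc_mult_mat[of _ "Suc n" "Suc n" _ "Suc n" _ "Suc n"])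
  then show ?thesis unfolding KiK using Kc Tc by simp
qed

theorem lemma3p4:
  fixes n :: nat and S T :: "complex mat"
  assumes "1 \<le> n"
    and "S \<in> Un1 n" and "T \<in> Un1 n"
    and "unipotent n S" and "parabolic n S"
    and "unipotent n T" and "parabolic n T"
  shows "S * T = T * S \<longleftrightarrow> isotropic n S T"
proof
  note n = assms(1) and SU = assms(2) and TU = assms(3)
  have Sc: "S \<in> carrier_mat (Suc n) (Suc n)" using Un1D(1)[OF SU] by simp
  have Tc: "T \<in> carrier_mat (Suc n) (Suc n)" using Un1D(1)[OF TU] by simp
  assume comm: "S * T = T * S"
  obtain z where z: "null_vec n z" and Tz: "fixes_pt T z"
    and uniq: "\<And>w. null_vec n w \<Longrightarrow> fixes_pt T w \<Longrightarrow> same_pt z w"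
    using assms(7) unfolding parabolic_def by blast
  have zc: "z \<in> carrier_vec (Suc n)" and z0: "z \<noteq> 0\<^sub>v (Suc n)" and hz: "herm n z z = 0"
    using z unfolding null_vec_def by auto
  obtain a where a: "T *\<^sub>v z = a \<cdot>\<^sub>v z" using Tz unfolding fixes_pt_def by blast
  have Szc: "S *\<^sub>v z \<in> carrier_vec (Suc n)" using Sc zc by simp
  have "S *\<^sub>v z \<noteq> 0\<^sub>v (Suc n)"
  proof
    assume h: "S *\<^sub>v z = 0\<^sub>v (Suc n)"
    have "z = (ainv n S * S) *\<^sub>v z" using Un1_inv(1)[OF SU n] zc by simp
    also have "\<dots> = ainv n S *\<^sub>v (S *\<^sub>v z)"
      using ainv_carrier[OF Un1D(1)[OF SU]] Sc zc by (simp add: assoc_mult_mat_vec[of _ "Suc n" "Suc n" _ "Suc n"])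
    also have "\<dots> = 0\<^sub>v (Suc n)" unfolding h using ainv_carrier[OF Un1D(1)[OF SU]]
      by (intro mult_zero_vec_r) simp
    finally show False using z0 by simp
  qed
  moreover have "herm n (S *\<^sub>v z) (S *\<^sub>v z) = 0" using herm_Un1[OF SU] zc hz by simp
  ultimately have Sznull: "null_vec n (S *\<^sub>v z)" unfolding null_vec_def using Szc by simp
  have "T *\<^sub>v (S *\<^sub>v z) = (T * S) *\<^sub>v z" using Tc Sc zc by simp
  also have "\<dots> = S *\<^sub>v (T *\<^sub>v z)" unfolding comm[symmetric] using Tc Sc zc by simp
  also have "\<dots> = a \<cdot>\<^sub>v (S *\<^sub>v z)" unfolding a using Sc zc by (simp add: mult_mat_vec)
  finally have "fixes_pt T (S *\<^sub>v z)" unfolding fixes_pt_def by blast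
  with uniq[OF Sznull] obtain d where d: "S *\<^sub>v z = d \<cdot>\<^sub>v z" unfolding same_pt_def by blast
  obtain K c where K: "K \<in> Un1 n" and c: "c \<noteq> 0" and Kz: "K *\<^sub>v z = c \<cdot>\<^sub>v e_inf n"
    using K_exists[OF n z] by blast
  obtain \<tau> t where tau: "\<tau> \<in> carrier_vec (n-1)" and MT: "K * T * ainv n K = heis n \<tau> t"
    using conj_heis[OF n K TU assms(6) _ a Kz c] zc by auto
  obtain \<sigma> s where sig: "\<sigma> \<in> carrier_vec (n-1)" and MS: "K * S * ainv n K = heis n \<sigma> s"
    using conj_heis[OF n K SU assms(4) _ d Kz c] zc by auto
  have Kc: "K \<in> carrier_mat (Suc n) (Suc n)" using Un1D(1)[OF K] by simp
  have Kic: "ainv n K \<in> carrier_mat (Suc n) (Suc n)" using ainv_carrier[OF Un1D(1)[OF K]] by simp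
  have KiK: "ainv n K * K = 1\<^sub>m (Suc n)" using Un1_inv(1)[OF K n] by simp
  note ass = assoc_mult_mat[of _ "Suc n" "Suc n" _ "Suc n" _ "Suc n"]
  have p1: "heis n \<sigma> s * heis n \<tau> t = K * S * (ainv n K * K) * T * ainv n K"
    unfolding MS[symmetric] MT[symmetric] using Kc Kic Sc Tc by (simp add: ass)
  have p2: "heis n \<tau> t * heis n \<sigma> s = K * T * (ainv n K * K) * S * ainv n K"
    unfolding MS[symmetric] MT[symmetric] using Kc Kic Sc Tc by (simp add: ass)
  have "heis n \<sigma> s * heis n \<tau> t = heis n \<tau> t * heis n \<sigma> s"
    unfolding p1 p2 KiK using Kc Kic Sc Tc comm by (simp add: ass)
  hence im: "Im (\<sigma> \<bullet>c \<tau>) = 0" using heis_comm[OF n sig tau] by simp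
  show "isotropic n S T" unfolding isotropic_def
    using z \<open>fixes_pt T z\<close> d Kz K tau sig im KT_heis[OF n K TU MT] KT_heis[OF n K SU MS]
    unfolding fixes_pt_def same_pt_def by blast
next
  note n = assms(1) and SU = assms(2) and TU = assms(3)
  have Sc: "S \<in> carrier_mat (Suc n) (Suc n)" using Un1D(1)[OF SU] by simp
  have Tc: "T \<in> carrier_mat (Suc n) (Suc n)" using Un1D(1)[OF TU] by simp
  assume "isotropic n S T"
  then obtain K \<tau> t \<sigma> s where K: "K \<in> Un1 n" and tau: "\<tau> \<in> carrier_vec (n-1)" and sig: "\<sigma> \<in> carrier_vec (n-1)"
    and KT: "K * T = heis n \<tau> t * K" and KS: "K * S = heis n \<sigma> s * K" and im: "Im (\<sigma> \<bullet>c \<tau>) = 0"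
    unfolding isotropic_def by blast
  have hc: "heis n \<sigma> s * heis n \<tau> t = heis n \<tau> t * heis n \<sigma> s" using heis_comm[OF n sig tau] im by simp
  have Kc: "K \<in> carrier_mat (Suc n) (Suc n)" using Un1D(1)[OF K] by simp
  have Kic: "ainv n K \<in> carrier_mat (Suc n) (Suc n)" using ainv_carrier[OF Un1D(1)[OF K]] by simp
  have KiK: "ainv n K * K = 1\<^sub>m (Suc n)" using Un1_inv(1)[OF K n] by simp
  note ass = assoc_mult_mat[of _ "Suc n" "Suc n" _ "Suc n" _ "Suc n"]
  have Hc: "heis n \<sigma> s \<in> carrier_mat (Suc n) (Suc n)" "heis n \<tau> t \<in> carrier_mat (Suc n) (Suc n)" by simp_all
  have "K * (S * T) = heis n \<sigma> s * heis n \<tau> t * K"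
  proof -
    have "K * (S * T) = (K * S) * T" using Kc Sc Tc by (simp add: ass)
    also have "\<dots> = heis n \<sigma> s * (K * T)" unfolding KS using Kc Tc Hc by (simp add: ass)
    also have "\<dots> = heis n \<sigma> s * heis n \<tau> t * K" unfolding KT using Kc Hc by (simp add: ass)
    finally show ?thesis .
  qed
  moreover have "K * (T * S) = heis n \<tau> t * heis n \<sigma> s * K"
  proof -
    have "K * (T * S) = (K * T) * S" using Kc Sc Tc by (simp add: ass)
    also have "\<dots> = heis n \<tau> t * (K * S)" unfolding KT using Kc Sc Hc by (simp add: ass)
    also have "\<dots> = heis n \<tau> t * heis n \<sigma> s * K" unfolding KS using Kc Hc by (simp add: ass)
    finally show ?thesis .
  qed
  ultimately have "K * (S * T) = K * (T * S)" using hc by simp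
  hence "ainv n K * (K * (S * T)) = ainv n K * (K * (T * S))" by simp
  hence "(ainv n K * K) * (S * T) = (ainv n K * K) * (T * S)" using Kc Kic Sc Tc by (simp add: ass)
  then show "S * T = T * S" unfolding KiK using Sc Tc by simp
qed

end
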